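(* Let $R$ be a commutative ring with unit, let $\mathcal{P}$ be a poset satisfying the descending chain condition, and let $F\colon \mathcal{P}\to R\text{-mod}$ be a functor. Then the natural map $\operatorname{colim}_{\mathcal{P}_{<i}}F\to F(i)$ is a monomorphism for every $i\in\mathcal{P}$ if and only if $F$ is pseudo-projective.
   Context: A poset satisfies the descending chain condition (DCC) if it has no infinite strictly descending chain. For $i\in\mathcal{P}$, $\mathcal{P}_{<i}=\{j\in\mathcal{P}: j<i\}$ and $\mathcal{P}_{\le i}=\{j: j\le i\}$. For $j\le i$, $F(j<i)$ denotes the image under $F$ of the unique arrow $j\to i$, with $F(i<i)=1_{F(i)}$. For $j\in\mathcal{P}$, $\operatorname{Im}_F(j)=\sum_{k<j}\operatorname{Im}F(k<j)\subseteq F(j)$. For a subset $J$, $\max J$ denotes the set of maximal elements of $J$. A functor $F\colon\mathcal{P}\to R\text{-mod}$ is pseudo-projective at $i\in\mathcal{P}$ if for every finite subset $J\subset\mathcal{P}_{\le i}$ and every $\oplus_{j\in J}x_j\in\bigoplus_{j\in J}F(j)$ with $\sum_{j\in J}F(j<i)(x_j)=0$, one has $x_j\in\operatorname{Im}_F(j)$ for every $j\in\max J$. $F$ is pseudo-projective if it is pseudo-projective at every $i\in\mathcal{P}$. *)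

theory Defs
  imports Main "HOL.Modules" "HOL-Library.Function_Algebras"
begin

definition DCC :: "'p::order itself \<Rightarrow> bool" where
  "DCC _ \<longleftrightarrow> \<not> (\<exists>f :: nat \<Rightarrow> 'p. \<forall>n. f (Suc n) < f n)"

text \<open>R-modules: all modules F(i) are submodules of one ambient R-module
  (scalar multiplication s on type 'm).  A functor F : P -> R-mod is given by
  objects F i and maps Fm j i = F(j<i) for j \<le> i (only relevant on F j).\<close>
definition is_module_functor ::
  "('r::comm_ring_1 \<Rightarrow> 'm::ab_group_add \<Rightarrow> 'm) \<Rightarrow> ('p::order \<Rightarrow> 'm set) \<Rightarrow> ('p \<Rightarrow> 'p \<Rightarrow> 'm \<Rightarrow> 'm) \<Rightarrow> bool" where
  "is_module_functor s F Fm \<longleftrightarrow>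
     (\<forall>i. module.subspace s (F i)) \<and>
     (\<forall>j i. j \<le> i \<longrightarrow>
        (\<forall>x\<in>F j. Fm j i x \<in> F i) \<and>
        (\<forall>x\<in>F j. \<forall>y\<in>F j. Fm j i (x + y) = Fm j i x + Fm j i y) \<and>
        (\<forall>c. \<forall>x\<in>F j. Fm j i (s c x) = s c (Fm j i x))) \<and>
     (\<forall>i. \<forall>x\<in>F i. Fm i i x = x) \<and>
     (\<forall>j k i. j \<le> k \<and> k \<le> i \<longrightarrow> (\<forall>x\<in>F j. Fm k i (Fm j k x) = Fm j i x))"

definition ImF :: "('p::order \<Rightarrow> 'm::ab_group_add set) \<Rightarrow> ('p \<Rightarrow> 'p \<Rightarrow> 'm \<Rightarrow> 'm) \<Rightarrow> 'p \<Rightarrow> 'm set" where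
  "ImF F Fm j = {(\<Sum>k\<in>K. Fm k j (y k)) | K y. finite K \<and> K \<subseteq> {k. k < j} \<and> (\<forall>k\<in>K. y k \<in> F k)}"

definition maxset :: "'p::order set \<Rightarrow> 'p set" where
  "maxset J = {j \<in> J. \<not> (\<exists>k\<in>J. j < k)}"

definition pseudo_projective_at ::
  "('p::order \<Rightarrow> 'm::ab_group_add set) \<Rightarrow> ('p \<Rightarrow> 'p \<Rightarrow> 'm \<Rightarrow> 'm) \<Rightarrow> 'p \<Rightarrow> bool" where
  "pseudo_projective_at F Fm i \<longleftrightarrow>
     (\<forall>J x. finite J \<and> J \<subseteq> {j. j \<le> i} \<and> (\<forall>j\<in>J. x j \<in> F j) \<and>
        (\<Sum>j\<in>J. Fm j i (x j)) = 0 \<longrightarrow> (\<forall>j\<in>maxset J. x j \<in> ImF F Fm j))"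

definition pseudo_projective ::
  "('p::order \<Rightarrow> 'm::ab_group_add set) \<Rightarrow> ('p \<Rightarrow> 'p \<Rightarrow> 'm \<Rightarrow> 'm) \<Rightarrow> bool" where
  "pseudo_projective F Fm \<longleftrightarrow> (\<forall>i. pseudo_projective_at F Fm i)"

text \<open>Standard construction of colim over P_{<i} of F: the direct sum of the F(j), j<i,
  (finitely supported families) modulo the submodule generated by the elements
  e_j(a) - e_k(F(j<k) a), j \<le> k < i, a \<in> F j.\<close>
definition dsum_below :: "('p::order \<Rightarrow> 'm::ab_group_add set) \<Rightarrow> 'p \<Rightarrow> ('p \<Rightarrow> 'm) set" where
  "dsum_below F i = {x. (\<forall>j. x j \<in> F j) \<and> (\<forall>j. \<not> j < i \<longrightarrow> x j = 0) \<and> finite {j. x j \<noteq> 0}}"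

definition fscale :: "('r \<Rightarrow> 'm \<Rightarrow> 'm) \<Rightarrow> 'r \<Rightarrow> ('p \<Rightarrow> 'm) \<Rightarrow> ('p \<Rightarrow> 'm)" where
  "fscale s c x = (\<lambda>l. s c (x l))"

definition colim_rel ::
  "('r::comm_ring_1 \<Rightarrow> 'm::ab_group_add \<Rightarrow> 'm) \<Rightarrow> ('p::order \<Rightarrow> 'm set) \<Rightarrow> ('p \<Rightarrow> 'p \<Rightarrow> 'm \<Rightarrow> 'm) \<Rightarrow> 'p \<Rightarrow> ('p \<Rightarrow> 'm) set" where
  "colim_rel s F Fm i = module.span (fscale s)
     {(\<lambda>l. (if l = j then a else 0) - (if l = k then Fm j k a else 0)) | j k a. j \<le> k \<and> k < i \<and> a \<in> F j}"

definition colim ::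
  "('r::comm_ring_1 \<Rightarrow> 'm::ab_group_add \<Rightarrow> 'm) \<Rightarrow> ('p::order \<Rightarrow> 'm set) \<Rightarrow> ('p \<Rightarrow> 'p \<Rightarrow> 'm \<Rightarrow> 'm) \<Rightarrow> 'p \<Rightarrow> ('p \<Rightarrow> 'm) set set" where
  "colim s F Fm i = (\<lambda>x. {y \<in> dsum_below F i. y - x \<in> colim_rel s F Fm i}) ` dsum_below F i"

definition dsum_map :: "('p::order \<Rightarrow> 'p \<Rightarrow> 'm::ab_group_add \<Rightarrow> 'm) \<Rightarrow> 'p \<Rightarrow> ('p \<Rightarrow> 'm) \<Rightarrow> 'm" where
  "dsum_map Fm i x = (\<Sum>j\<in>{j. x j \<noteq> 0}. Fm j i (x j))"

definition colim_map :: "('p::order \<Rightarrow> 'p \<Rightarrow> 'm::ab_group_add \<Rightarrow> 'm) \<Rightarrow> 'p \<Rightarrow> ('p \<Rightarrow> 'm) set \<Rightarrow> 'm" where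
  "colim_map Fm i c = (THE y. \<exists>x\<in>c. y = dsum_map Fm i x)"

end

theory Submission
  imports Defs "HOL-Library.Multiset"
begin

definition ee :: "'p \<Rightarrow> 'm::zero \<Rightarrow> 'p \<Rightarrow> 'm" where
  "ee j a = (\<lambda>l. if l = j then a else 0)"

definition sg :: "('p \<Rightarrow> 'p \<Rightarrow> 'm::ab_group_add \<Rightarrow> 'm) \<Rightarrow> ('p \<times> 'p \<times> 'm) list \<Rightarrow> 'p \<Rightarrow> 'm" where
  "sg Fm L = sum_list (map (\<lambda>(j,k,a). ee j a - ee k (Fm j k a)) L)"

definition finb :: "('p::order \<Rightarrow> 'm::ab_group_add set) \<Rightarrow> 'p \<Rightarrow> ('p \<Rightarrow> 'm) \<Rightarrow> bool" where
  "finb F n y \<longleftrightarrow> (\<forall>l. y l \<in> F l) \<and> (\<forall>l. \<not> l \<le> n \<longrightarrow> y l = 0) \<and> finite {l. y l \<noteq> 0}"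

definition tk :: "'a \<times> 'b \<times> 'c \<Rightarrow> 'b" where
  "tk t = fst (snd t)"

lemma sum_list_zero_if: "(\<And>x. x \<in> set xs \<Longrightarrow> f x = (0::'a::monoid_add)) \<Longrightarrow> sum_list (map f xs) = 0"
  by (induction xs) auto

lemma sum_fun_apply: "(\<Sum>k\<in>K. f k) l = (\<Sum>k\<in>K. f k l)"
  by (induction K rule: infinite_finite_induct) auto

lemma sum_list_fun_apply: "(sum_list xs) l = sum_list (map (\<lambda>f. f l) xs)"
  by (induction xs) auto

lemma ee_apply: "ee j a l = (if l = j then a else 0)"
  by (simp add: ee_def)

lemma ee_add: "ee j ((a::'m::monoid_add) + b) = ee j a + ee j b"
  by (auto simp: ee_def fun_eq_iff)

lemma ee_zero[simp]: "ee j 0 = 0"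
  by (auto simp: ee_def)

lemma sg_Nil[simp]: "sg Fm [] = 0" by (simp add: sg_def)
lemma sg_Cons[simp]: "sg Fm ((j,k,a)#L) = (ee j a - ee k (Fm j k a)) + sg Fm L"
  by (simp add: sg_def)
lemma sg_append[simp]: "sg Fm (L1 @ L2) = sg Fm L1 + sg Fm L2"
  by (simp add: sg_def)

lemma sg_apply: "sg Fm L l = sum_list (map (\<lambda>(j,k,a). (if l = j then a else 0) - (if l = k then Fm j k a else 0)) L)"
  by (induction L) (auto simp: ee_def)

lemma sg_filter: "sg Fm (filter P L) + sg Fm (filter (\<lambda>t. \<not> P t) L) = sg Fm L"
  by (induction L) (auto simp: fun_eq_iff algebra_simps)

lemma mset_map_filter: "mset (map f L) = mset (map f (filter P L)) + mset (map f (filter (\<lambda>t. \<not> P t) L))"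
  by (induction L) auto

lemma wf_less_DCC:
  assumes "DCC TYPE('p::order)"
  shows "wf {(x::'p, y). x < y}"
  using assms unfolding DCC_def wf_iff_no_infinite_down_chain by auto

context
  fixes s :: "'r::comm_ring_1 \<Rightarrow> 'm::ab_group_add \<Rightarrow> 'm"
    and F :: "'p::order \<Rightarrow> 'm set"
    and Fm :: "'p \<Rightarrow> 'p \<Rightarrow> 'm \<Rightarrow> 'm"
  assumes md: "module s"
    and fu: "is_module_functor s F Fm"
begin

lemma Fsub: "module.subspace s (F i)"
  using fu unfolding is_module_functor_def by auto

lemma F0[simp]: "0 \<in> F i"
  using module.subspace_0[OF md Fsub] .
lemma Fadd: "a \<in> F i \<Longrightarrow> b \<in> F i \<Longrightarrow> a + b \<in> F i"
  using module.subspace_add[OF md Fsub] by blast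
lemma Fneg: "a \<in> F i \<Longrightarrow> - a \<in> F i"
  using module.subspace_neg[OF md Fsub] by blast
lemma Fdiff: "a \<in> F i \<Longrightarrow> b \<in> F i \<Longrightarrow> a - b \<in> F i"
  using module.subspace_diff[OF md Fsub] by blast
lemma Fscale: "a \<in> F i \<Longrightarrow> s c a \<in> F i"
  using module.subspace_scale[OF md Fsub] by blast
lemma Fsum: "(\<And>k. k \<in> K \<Longrightarrow> f k \<in> F i) \<Longrightarrow> sum f K \<in> F i"
  using module.subspace_sum[OF md Fsub] by blast
lemma Fsum_list: "(\<And>x. x \<in> set xs \<Longrightarrow> x \<in> F i) \<Longrightarrow> sum_list xs \<in> F i"
  by (induction xs) (auto intro: Fadd)

lemma Fm_in: "j \<le> i \<Longrightarrow> a \<in> F j \<Longrightarrow> Fm j i a \<in> F i"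
  using fu unfolding is_module_functor_def by blast
lemma Fm_add: "j \<le> i \<Longrightarrow> a \<in> F j \<Longrightarrow> b \<in> F j \<Longrightarrow> Fm j i (a + b) = Fm j i a + Fm j i b"
  using fu unfolding is_module_functor_def by blast
lemma Fm_scale: "j \<le> i \<Longrightarrow> a \<in> F j \<Longrightarrow> Fm j i (s c a) = s c (Fm j i a)"
  using fu unfolding is_module_functor_def by blast
lemma Fm_id: "a \<in> F i \<Longrightarrow> Fm i i a = a"
  using fu unfolding is_module_functor_def by blast
lemma Fm_comp: "j \<le> k \<Longrightarrow> k \<le> i \<Longrightarrow> a \<in> F j \<Longrightarrow> Fm k i (Fm j k a) = Fm j i a"
  using fu unfolding is_module_functor_def by blast
lemma Fm_zero: "j \<le> i \<Longrightarrow> Fm j i 0 = 0"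
  using Fm_add[of j i 0 0] by simp
lemma Fm_neg: "j \<le> i \<Longrightarrow> a \<in> F j \<Longrightarrow> Fm j i (- a) = - Fm j i a"
  using Fm_add[of j i a "-a"] Fm_zero[of j i] Fneg[of a j] minus_unique[of "Fm j i a" "Fm j i (-a)"]
  by simp
lemma Fm_diff: "j \<le> i \<Longrightarrow> a \<in> F j \<Longrightarrow> b \<in> F j \<Longrightarrow> Fm j i (a - b) = Fm j i a - Fm j i b"
  using Fm_add[of j i a "-b"] Fm_neg[of j i b] Fneg[of b j] by simp
lemma Fm_sum: "j \<le> i \<Longrightarrow> (\<And>k. k \<in> K \<Longrightarrow> f k \<in> F j) \<Longrightarrow> Fm j i (sum f K) = (\<Sum>k\<in>K. Fm j i (f k))"
proof (induction K rule: infinite_finite_induct)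
  case (insert x K)
  then show ?case by (simp add: Fm_add Fsum)
qed (auto simp: Fm_zero)

lemma modf: "module (fscale s :: 'r \<Rightarrow> ('p \<Rightarrow> 'm) \<Rightarrow> ('p \<Rightarrow> 'm))"
  using md unfolding module_def fscale_def
  by (auto simp: fun_eq_iff)

lemma finb_zero: "finb F n 0"
  by (simp add: finb_def)

lemma finb_add: "finb F n x \<Longrightarrow> finb F n y \<Longrightarrow> finb F n (x + y)"
  unfolding finb_def
proof (intro conjI allI impI)
  assume a: "(\<forall>l. x l \<in> F l) \<and> (\<forall>l. \<not> l \<le> n \<longrightarrow> x l = 0) \<and> finite {l. x l \<noteq> 0}"
    "(\<forall>l. y l \<in> F l) \<and> (\<forall>l. \<not> l \<le> n \<longrightarrow> y l = 0) \<and> finite {l. y l \<noteq> 0}"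
  show "(x + y) l \<in> F l" for l using a by (simp add: Fadd)
  show "\<not> l \<le> n \<Longrightarrow> (x + y) l = 0" for l using a by simp
  have "{l. (x + y) l \<noteq> 0} \<subseteq> {l. x l \<noteq> 0} \<union> {l. y l \<noteq> 0}" by auto
  then show "finite {l. (x + y) l \<noteq> 0}" using a finite_subset by blast
qed

lemma finb_neg: "finb F n x \<Longrightarrow> finb F n (- x)"
  unfolding finb_def by (simp add: Fneg)

lemma finb_diff: "finb F n x \<Longrightarrow> finb F n y \<Longrightarrow> finb F n (x - y)"
  using finb_add[of n x "- y"] finb_neg[of n y] by simp

lemma finb_ee:
  assumes "j \<le> n" "a \<in> F j"
  shows "finb F n (ee j a)"
proof -
  have f: "finite {l. ee j a l \<noteq> 0}" by (rule finite_subset[of _ "{j}"]) (auto simp: ee_def)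
  show ?thesis unfolding finb_def using f assms by (auto simp: ee_def)
qed

lemma dsum_finb: "x \<in> dsum_below F n \<Longrightarrow> finb F n x"
  unfolding dsum_below_def finb_def by (auto simp: less_le_not_le)

lemma dsum_zero: "0 \<in> dsum_below F n"
  by (simp add: dsum_below_def)

lemma dsum_add:
  assumes "x \<in> dsum_below F n" "y \<in> dsum_below F n"
  shows "x + y \<in> dsum_below F n"
proof -
  have "{l. (x + y) l \<noteq> 0} \<subseteq> {l. x l \<noteq> 0} \<union> {l. y l \<noteq> 0}" by auto
  moreover have "finite ({l. x l \<noteq> 0} \<union> {l. y l \<noteq> 0})"
    using assms unfolding dsum_below_def by auto
  ultimately have f: "finite {l. (x + y) l \<noteq> 0}" by (rule finite_subset)
  have "\<forall>l. (x + y) l \<in> F l" using assms unfolding dsum_below_def by (auto simp: Fadd)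
  moreover have "\<forall>l. \<not> l < n \<longrightarrow> (x + y) l = 0" using assms unfolding dsum_below_def by auto
  ultimately show ?thesis using f unfolding dsum_below_def by blast
qed

lemma dsum_neg: "x \<in> dsum_below F n \<Longrightarrow> - x \<in> dsum_below F n"
  unfolding dsum_below_def by (simp add: Fneg)

lemma dsum_diff: "x \<in> dsum_below F n \<Longrightarrow> y \<in> dsum_below F n \<Longrightarrow> x - y \<in> dsum_below F n"
  using dsum_add[of x n "- y"] dsum_neg[of y n] by simp

lemma dsum_ee:
  assumes "j < n" "a \<in> F j"
  shows "ee j a \<in> dsum_below F n"
proof -
  have f: "finite {l. ee j a l \<noteq> 0}" by (rule finite_subset[of _ "{j}"]) (auto simp: ee_def)
  show ?thesis unfolding dsum_below_def using f assms by (auto simp: ee_def)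
qed

lemma DM:
  assumes "finb F n y" "finite S" "{l. y l \<noteq> 0} \<subseteq> S" "S \<subseteq> {l. l \<le> n}"
  shows "dsum_map Fm n y = (\<Sum>l\<in>S. Fm l n (y l))"
  unfolding dsum_map_def
  by (rule sum.mono_neutral_left) (use assms in \<open>auto simp: Fm_zero\<close>)

lemma dm_add:
  assumes "finb F n x" "finb F n y"
  shows "dsum_map Fm n (x + y) = dsum_map Fm n x + dsum_map Fm n y"
proof -
  let ?S = "{l. x l \<noteq> 0} \<union> {l. y l \<noteq> 0}"
  have fS: "finite ?S" using assms unfolding finb_def by auto
  have Sn: "?S \<subseteq> {l. l \<le> n}" using assms unfolding finb_def by auto
  have "dsum_map Fm n (x + y) = (\<Sum>l\<in>?S. Fm l n ((x + y) l))"
    by (rule DM) (use assms fS Sn finb_add in auto)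
  also have "\<dots> = (\<Sum>l\<in>?S. Fm l n (x l) + Fm l n (y l))"
    by (rule sum.cong) (use assms Sn in \<open>auto simp: finb_def Fm_add\<close>)
  also have "\<dots> = dsum_map Fm n x + dsum_map Fm n y"
    by (simp add: sum.distrib DM[OF assms(1) fS _ Sn] DM[OF assms(2) fS _ Sn])
  finally show ?thesis .
qed

lemma dm_neg:
  assumes "finb F n x"
  shows "dsum_map Fm n (- x) = - dsum_map Fm n x"
proof -
  let ?S = "{l. x l \<noteq> 0}"
  have fS: "finite ?S" using assms unfolding finb_def by auto
  have Sn: "?S \<subseteq> {l. l \<le> n}" using assms unfolding finb_def by auto
  have "dsum_map Fm n (- x) = (\<Sum>l\<in>?S. Fm l n ((- x) l))"
    by (rule DM) (use assms fS Sn finb_neg in auto)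
  also have "\<dots> = (\<Sum>l\<in>?S. - Fm l n (x l))"
    by (rule sum.cong) (use assms Sn in \<open>auto simp: finb_def Fm_neg\<close>)
  also have "\<dots> = - dsum_map Fm n x"
    by (simp add: sum_negf DM[OF assms(1) fS _ Sn])
  finally show ?thesis .
qed

lemma dm_diff:
  assumes "finb F n x" "finb F n y"
  shows "dsum_map Fm n (x - y) = dsum_map Fm n x - dsum_map Fm n y"
  using dm_add[OF assms(1) finb_neg[OF assms(2)]] dm_neg[OF assms(2)] by simp

lemma dm_zero: "dsum_map Fm n 0 = 0"
  by (simp add: dsum_map_def)

lemma dm_ee:
  assumes "j \<le> n" "a \<in> F j"
  shows "dsum_map Fm n (ee j a) = Fm j n a"
proof -
  have "dsum_map Fm n (ee j a) = (\<Sum>l\<in>{j}. Fm l n (ee j a l))"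
    by (rule DM[OF finb_ee[OF assms]]) (auto simp: ee_def assms)
  then show ?thesis by (simp add: ee_def)
qed

lemma sg_props:
  assumes "\<forall>(j,k,a)\<in>set L. j \<le> k \<and> k \<le> n \<and> a \<in> F j"
  shows "finb F n (sg Fm L) \<and> dsum_map Fm n (sg Fm L) = 0"
  using assms
proof (induction L)
  case Nil
  show ?case by (simp only: sg_Nil finb_zero dm_zero simp_thms)
next
  case (Cons t L)
  obtain j k a where t: "t = (j,k,a)" by (cases t)
  have h: "j \<le> k" "k \<le> n" "a \<in> F j" using Cons.prems t by auto
  have jn: "j \<le> n" using h by simp
  have e1: "finb F n (ee j a)" by (rule finb_ee[OF jn h(3)])
  have e2: "finb F n (ee k (Fm j k a))" by (rule finb_ee[OF h(2) Fm_in[OF h(1) h(3)]])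
  have IH: "finb F n (sg Fm L)" "dsum_map Fm n (sg Fm L) = 0" using Cons by auto
  have fd: "finb F n (ee j a - ee k (Fm j k a))" using finb_diff[OF e1 e2] .
  have "dsum_map Fm n (ee j a - ee k (Fm j k a) + sg Fm L)
     = dsum_map Fm n (ee j a) - dsum_map Fm n (ee k (Fm j k a)) + dsum_map Fm n (sg Fm L)"
    by (simp only: dm_add[OF fd IH(1)] dm_diff[OF e1 e2])
  also have "\<dots> = Fm j n a - Fm k n (Fm j k a) + 0"
    by (simp only: dm_ee[OF jn h(3)] dm_ee[OF h(2) Fm_in[OF h(1) h(3)]] IH(2))
  also have "\<dots> = 0" by (simp add: Fm_comp[OF h])
  finally show ?case unfolding t sg_Cons using finb_add[OF fd IH(1)] by blast
qed

lemma sg_dsum: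
  assumes "\<forall>(j,k,a)\<in>set L. j \<le> k \<and> k < n \<and> a \<in> F j"
  shows "sg Fm L \<in> dsum_below F n"
  using assms
proof (induction L)
  case Nil
  show ?case by (simp only: sg_Nil dsum_zero)
next
  case (Cons t L)
  obtain j k a where t: "t = (j,k,a)" by (cases t)
  have h: "j \<le> k" "k < n" "a \<in> F j" using Cons.prems t by auto
  have IH: "sg Fm L \<in> dsum_below F n" using Cons by auto
  have jn: "j < n" using h by simp
  show ?case unfolding t sg_Cons
    by (rule dsum_add[OF dsum_diff[OF dsum_ee[OF jn h(3)] dsum_ee[OF h(2) Fm_in[OF h(1) h(3)]]] IH])
qed

lemma gen_eq: "(\<lambda>l. (if l = j then a else 0) - (if l = k then Fm j k a else 0)) = ee j a - ee k (Fm j k a)"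
  by (simp add: ee_def fun_eq_iff)

lemma rel_rep:
  assumes "x \<in> colim_rel s F Fm i"
  shows "\<exists>L. (\<forall>(j,k,a)\<in>set L. j < k \<and> k < i \<and> a \<in> F j) \<and> x = sg Fm L"
proof -
  have "x \<in> module.span (fscale s) {(\<lambda>l. (if l = j then a else 0) - (if l = k then Fm j k a else 0)) | j k a. j \<le> k \<and> k < i \<and> a \<in> F j}"
    using assms unfolding colim_rel_def .
  then show ?thesis
  proof (rule module.span_induct_alt[OF modf])
    show "\<exists>L. (\<forall>(j,k,a)\<in>set L. j < k \<and> k < i \<and> a \<in> F j) \<and> 0 = sg Fm L"
      by (intro exI[of _ "[]"]) (simp only: sg_Nil, simp)
  next
    fix c g y
    assume g0: "g \<in> {(\<lambda>l. (if l = j then a else 0) - (if l = k then Fm j k a else 0)) | j k a. j \<le> k \<and> k < i \<and> a \<in> F j}"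
      and y0: "\<exists>L. (\<forall>(j,k,a)\<in>set L. j < k \<and> k < i \<and> a \<in> F j) \<and> y = sg Fm L"
    from y0 obtain L where L: "\<forall>(j,k,a)\<in>set L. j < k \<and> k < i \<and> a \<in> F j" "y = sg Fm L" by blast
    from g0 obtain j k a where g: "g = ee j a - ee k (Fm j k a)" "j \<le> k" "k < i" "a \<in> F j"
      by (auto simp: gen_eq)
    have sc: "s c a \<in> F j" using g(4) by (rule Fscale)
    have sg_eq: "fscale s c g = ee j (s c a) - ee k (Fm j k (s c a))"
      using g by (auto simp: fscale_def ee_def fun_eq_iff Fm_scale module.scale_zero_right[OF md] module.scale_minus_right[OF md] module.scale_right_diff_distrib[OF md])
    show "\<exists>L. (\<forall>(j,k,a)\<in>set L. j < k \<and> k < i \<and> a \<in> F j) \<and> fscale s c g + y = sg Fm L"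
    proof (cases "j = k")
      case True
      then have "fscale s c g = 0" using sg_eq Fm_id[OF sc] by simp
      then show ?thesis using L by auto
    next
      case False
      then have "fscale s c g + y = sg Fm ((j,k,s c a)#L)" using sg_eq L(2) by (simp only: sg_Cons)
      moreover have "\<forall>(j,k,a)\<in>set ((j,k,s c a)#L). j < k \<and> k < i \<and> a \<in> F j"
        using L(1) g False sc by auto
      ultimately show ?thesis by blast
    qed
  qed
qed

lemma sg_rel:
  assumes "\<forall>(j,k,a)\<in>set L. j \<le> k \<and> k < i \<and> a \<in> F j"
  shows "sg Fm L \<in> colim_rel s F Fm i"
  using assms
proof (induction L)
  case Nil
  show ?case unfolding colim_rel_def sg_Nil by (rule module.span_zero[OF modf])
next
  case (Cons t L)
  obtain j k a where t: "t = (j,k,a)" by (cases t)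
  have h: "j \<le> k" "k < i" "a \<in> F j" using Cons.prems t by auto
  have "ee j a - ee k (Fm j k a) \<in> colim_rel s F Fm i"
    unfolding colim_rel_def
    by (rule module.span_base[OF modf]) (use h in \<open>auto simp: gen_eq[symmetric]\<close>)
  moreover have "sg Fm L \<in> colim_rel s F Fm i" using Cons by auto
  ultimately show ?case unfolding t sg_Cons colim_rel_def
    by (rule module.span_add[OF modf])
qed

lemma rel_props:
  assumes "x \<in> colim_rel s F Fm i"
  shows "x \<in> dsum_below F i \<and> dsum_map Fm i x = 0"
proof -
  obtain L where L: "\<forall>(j,k,a)\<in>set L. j < k \<and> k < i \<and> a \<in> F j" "x = sg Fm L"
    using rel_rep[OF assms] by blast
  have "\<forall>(j,k,a)\<in>set L. j \<le> k \<and> k \<le> i \<and> a \<in> F j" using L(1) by fastforce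
  moreover have "\<forall>(j,k,a)\<in>set L. j \<le> k \<and> k < i \<and> a \<in> F j" using L(1) by fastforce
  ultimately show ?thesis using sg_props sg_dsum L(2) by blast
qed

lemma rel_add: "x \<in> colim_rel s F Fm i \<Longrightarrow> y \<in> colim_rel s F Fm i \<Longrightarrow> x + y \<in> colim_rel s F Fm i"
  unfolding colim_rel_def by (rule module.span_add[OF modf])
lemma rel_diff: "x \<in> colim_rel s F Fm i \<Longrightarrow> y \<in> colim_rel s F Fm i \<Longrightarrow> x - y \<in> colim_rel s F Fm i"
  unfolding colim_rel_def by (rule module.span_diff[OF modf])
lemma rel_zero: "0 \<in> colim_rel s F Fm i"
  unfolding colim_rel_def by (rule module.span_zero[OF modf])

lemma colim_map_coset:
  assumes "x \<in> dsum_below F i"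
  shows "colim_map Fm i {y \<in> dsum_below F i. y - x \<in> colim_rel s F Fm i} = dsum_map Fm i x"
  unfolding colim_map_def
proof (rule the_equality)
  show "\<exists>z\<in>{y \<in> dsum_below F i. y - x \<in> colim_rel s F Fm i}. dsum_map Fm i x = dsum_map Fm i z"
    using assms rel_zero by (intro bexI[of _ x]) auto
next
  fix w assume "\<exists>z\<in>{y \<in> dsum_below F i. y - x \<in> colim_rel s F Fm i}. w = dsum_map Fm i z"
  then obtain z where z: "z \<in> dsum_below F i" "z - x \<in> colim_rel s F Fm i" "w = dsum_map Fm i z" by blast
  have "dsum_map Fm i (z - x) = 0" using rel_props[OF z(2)] by blast
  then show "w = dsum_map Fm i x"
    using dm_diff[OF dsum_finb[OF z(1)] dsum_finb[OF assms]] z(3) by simp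
qed

lemma inj_iff:
  "inj_on (colim_map Fm i) (colim s F Fm i) \<longleftrightarrow>
   (\<forall>x\<in>dsum_below F i. dsum_map Fm i x = 0 \<longrightarrow> x \<in> colim_rel s F Fm i)"
proof
  assume inj: "inj_on (colim_map Fm i) (colim s F Fm i)"
  show "\<forall>x\<in>dsum_below F i. dsum_map Fm i x = 0 \<longrightarrow> x \<in> colim_rel s F Fm i"
  proof (intro ballI impI)
    fix x assume x: "x \<in> dsum_below F i" "dsum_map Fm i x = 0"
    let ?c = "\<lambda>x. {y \<in> dsum_below F i. y - x \<in> colim_rel s F Fm i}"
    have cx: "?c x \<in> colim s F Fm i" using x(1) unfolding colim_def by (rule imageI)
    have c0: "?c 0 \<in> colim s F Fm i" using dsum_zero[of i] unfolding colim_def by (rule imageI)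
    have m1: "colim_map Fm i (?c x) = dsum_map Fm i x" by (rule colim_map_coset[OF x(1)])
    have m2: "colim_map Fm i (?c 0) = dsum_map Fm i 0" by (rule colim_map_coset[OF dsum_zero])
    have m: "colim_map Fm i (?c x) = colim_map Fm i (?c 0)"
      by (simp only: m1 m2 x(2) dm_zero)
    have eq: "?c x = ?c 0" by (rule inj_onD[OF inj m cx c0])
    have "x \<in> ?c x" using x(1) rel_zero[of i] by (simp only: mem_Collect_eq diff_self)
    then have "x \<in> ?c 0" by (simp only: eq)
    then show "x \<in> colim_rel s F Fm i" by (simp only: mem_Collect_eq diff_zero)
  qed
next
  assume H: "\<forall>x\<in>dsum_below F i. dsum_map Fm i x = 0 \<longrightarrow> x \<in> colim_rel s F Fm i"
  show "inj_on (colim_map Fm i) (colim s F Fm i)"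
  proof (rule inj_onI)
    fix c1 c2 assume c: "c1 \<in> colim s F Fm i" "c2 \<in> colim s F Fm i" "colim_map Fm i c1 = colim_map Fm i c2"
    from c(1) obtain x1 where x1: "x1 \<in> dsum_below F i" "c1 = {y \<in> dsum_below F i. y - x1 \<in> colim_rel s F Fm i}"
      unfolding colim_def by blast
    from c(2) obtain x2 where x2: "x2 \<in> dsum_below F i" "c2 = {y \<in> dsum_below F i. y - x2 \<in> colim_rel s F Fm i}"
      unfolding colim_def by blast
    have "dsum_map Fm i x1 = dsum_map Fm i x2"
      using c(3) colim_map_coset[OF x1(1)] colim_map_coset[OF x2(1)] x1(2) x2(2) by simp
    then have "dsum_map Fm i (x1 - x2) = 0"
      using dm_diff[OF dsum_finb[OF x1(1)] dsum_finb[OF x2(1)]] by simp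
    then have r: "x1 - x2 \<in> colim_rel s F Fm i" using H dsum_diff[OF x1(1) x2(1)] by blast
    have "y - x1 \<in> colim_rel s F Fm i \<longleftrightarrow> y - x2 \<in> colim_rel s F Fm i" for y
    proof
      assume "y - x1 \<in> colim_rel s F Fm i"
      from rel_add[OF this r] show "y - x2 \<in> colim_rel s F Fm i" by (simp add: algebra_simps)
    next
      assume "y - x2 \<in> colim_rel s F Fm i"
      from rel_diff[OF this r] show "y - x1 \<in> colim_rel s F Fm i" by (simp add: algebra_simps)
    qed
    then show "c1 = c2" using x1(2) x2(2) by simp
  qed
qed

lemma ImF_zero: "0 \<in> ImF F Fm m"
  unfolding ImF_def by (rule CollectI, rule exI[of _ "{}"], auto)

lemma ImF_single: "j < m \<Longrightarrow> b \<in> F j \<Longrightarrow> Fm j m b \<in> ImF F Fm m"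
  unfolding ImF_def by (rule CollectI, rule exI[of _ "{j}"], rule exI[of _ "\<lambda>_. b"], auto)

lemma ImF_add:
  assumes "u \<in> ImF F Fm m" "v \<in> ImF F Fm m"
  shows "u + v \<in> ImF F Fm m"
proof -
  obtain K1 y1 where 1: "u = (\<Sum>k\<in>K1. Fm k m (y1 k))" "finite K1" "K1 \<subseteq> {k. k < m}" "\<forall>k\<in>K1. y1 k \<in> F k"
    using assms(1) unfolding ImF_def by blast
  obtain K2 y2 where 2: "v = (\<Sum>k\<in>K2. Fm k m (y2 k))" "finite K2" "K2 \<subseteq> {k. k < m}" "\<forall>k\<in>K2. y2 k \<in> F k"
    using assms(2) unfolding ImF_def by blast
  define Y1 where "Y1 k = (if k \<in> K1 then y1 k else 0)" for k
  define Y2 where "Y2 k = (if k \<in> K2 then y2 k else 0)" for k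
  let ?K = "K1 \<union> K2"
  have Y1F: "Y1 k \<in> F k" for k using 1 by (simp add: Y1_def)
  have Y2F: "Y2 k \<in> F k" for k using 2 by (simp add: Y2_def)
  have fK: "finite ?K" using 1 2 by simp
  have Km: "?K \<subseteq> {k. k < m}" using 1 2 by simp
  have s1: "(\<Sum>k\<in>?K. Fm k m (Y1 k)) = u"
    unfolding 1(1) by (rule sum.mono_neutral_cong_right) (use fK Km in \<open>auto simp: Y1_def Fm_zero\<close>)
  have s2: "(\<Sum>k\<in>?K. Fm k m (Y2 k)) = v"
    unfolding 2(1) by (rule sum.mono_neutral_cong_right) (use fK Km in \<open>auto simp: Y2_def Fm_zero\<close>)
  have "(\<Sum>k\<in>?K. Fm k m (Y1 k + Y2 k)) = (\<Sum>k\<in>?K. Fm k m (Y1 k) + Fm k m (Y2 k))"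
    by (rule sum.cong) (use Km Y1F Y2F in \<open>auto simp: Fm_add\<close>)
  also have "\<dots> = u + v" by (simp add: sum.distrib s1 s2)
  finally have uv: "u + v = (\<Sum>k\<in>?K. Fm k m (Y1 k + Y2 k))" by simp
  have YF: "\<forall>k\<in>?K. Y1 k + Y2 k \<in> F k" using Y1F Y2F Fadd by blast
  show ?thesis unfolding ImF_def mem_Collect_eq
    by (intro exI[of _ ?K] exI[of _ "\<lambda>k. Y1 k + Y2 k"] conjI uv fK Km YF)
qed

lemma ImF_sum_list: "(\<And>v. v \<in> set vs \<Longrightarrow> v \<in> ImF F Fm m) \<Longrightarrow> sum_list vs \<in> ImF F Fm m"
  by (induction vs) (auto intro: ImF_add ImF_zero)

lemma dsum_sum_list: "(\<And>v. v \<in> set vs \<Longrightarrow> v \<in> dsum_below F n) \<Longrightarrow> sum_list vs \<in> dsum_below F n"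
proof (induction vs)
  case Nil
  show ?case by (simp only: sum_list.Nil dsum_zero)
next
  case (Cons v vs)
  have "sum_list vs \<in> dsum_below F n" using Cons by simp
  moreover have "v \<in> dsum_below F n" using Cons by simp
  ultimately show ?case by (simp only: sum_list.Cons dsum_add)
qed

lemma dm_sumee:
  assumes "\<forall>(j,k,a)\<in>set L. j \<le> k \<and> k = n \<and> a \<in> F j"
  shows "finb F n (sum_list (map (\<lambda>(j,k,a). ee j a) L)) \<and>
         dsum_map Fm n (sum_list (map (\<lambda>(j,k,a). ee j a) L)) = sum_list (map (\<lambda>(j,k,a). Fm j k a) L)"
  using assms
proof (induction L)
  case Nil
  show ?case by (simp only: list.map sum_list.Nil finb_zero dm_zero simp_thms)
next
  case (Cons t L)
  obtain j k a where t: "t = (j,k,a)" by (cases t)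
  have h: "j \<le> k" "k = n" "a \<in> F j" using Cons.prems t by auto
  have jn: "j \<le> n" using h by simp
  have IH: "finb F n (sum_list (map (\<lambda>(j,k,a). ee j a) L))"
    "dsum_map Fm n (sum_list (map (\<lambda>(j,k,a). ee j a) L)) = sum_list (map (\<lambda>(j,k,a). Fm j k a) L)"
    using Cons by auto
  have e: "finb F n (ee j a)" by (rule finb_ee[OF jn h(3)])
  have "sum_list (map (\<lambda>(j,k,a). ee j a) (t # L)) = ee j a + sum_list (map (\<lambda>(j,k,a). ee j a) L)"
    by (simp add: t)
  moreover have "sum_list (map (\<lambda>(j,k,a). Fm j k a) (t # L)) = Fm j n a + sum_list (map (\<lambda>(j,k,a). Fm j k a) L)"
    by (simp add: t h(2))
  ultimately show ?case
    using finb_add[OF e IH(1)] dm_add[OF e IH(1)] IH(2) dm_ee[OF jn h(3)] by (simp only:)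
qed

lemma sgN:
  assumes "\<forall>(j,k,a)\<in>set L. k = n"
  shows "sg Fm L = sum_list (map (\<lambda>(j,k,a). ee j a) L) - ee n (sum_list (map (\<lambda>(j,k,a). Fm j k a) L))"
  using assms
proof (induction L)
  case Nil
  show ?case by (simp only: sg_Nil list.map sum_list.Nil ee_zero diff_zero)
next
  case (Cons t L)
  obtain j k a where t: "t = (j,k,a)" by (cases t)
  have h: "k = n" using Cons.prems t by auto
  have IH: "sg Fm L = sum_list (map (\<lambda>(j,k,a). ee j a) L) - ee n (sum_list (map (\<lambda>(j,k,a). Fm j k a) L))"
    using Cons by auto
  show ?case unfolding t sg_Cons IH h
    by (simp add: ee_add algebra_simps)
qed

lemma lemA:
  assumes wfR: "wf {(x::'p, y). x < y}"
    and inj: "\<And>n y. y \<in> dsum_below F n \<Longrightarrow> dsum_map Fm n y = 0 \<Longrightarrow> y \<in> colim_rel s F Fm n"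
  shows "(\<forall>(j,k,a)\<in>set L. j < k \<and> a \<in> F j) \<Longrightarrow> (\<forall>l. m < l \<longrightarrow> sg Fm L l = 0) \<Longrightarrow> sg Fm L m \<in> ImF F Fm m"
  using wf_mult[OF wfR]
proof (induction "mset (map tk L)" arbitrary: L rule: wf_induct_rule)
  case less
  note IH = less.hyps
  have items: "\<forall>(j,k,a)\<in>set L. j < k \<and> a \<in> F j" by fact
  have zero_above: "\<forall>l. m < l \<longrightarrow> sg Fm L l = 0" by fact
  show ?case
  proof (cases "\<exists>t\<in>set L. m < tk t")
    case False
    have "sg Fm L m = sum_list (map (\<lambda>(j,k,a). (if m = j then a else 0) - (if m = k then Fm j k a else 0)) L)"
      by (rule sg_apply)
    also have "\<dots> \<in> ImF F Fm m"
    proof (rule ImF_sum_list)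
      fix v assume "v \<in> set (map (\<lambda>(j,k,a). (if m = j then a else 0) - (if m = k then Fm j k a else 0)) L)"
      then obtain j k a where jka: "(j,k,a) \<in> set L" "v = (if m = j then a else 0) - (if m = k then Fm j k a else 0)"
        by auto
      have jk: "j < k" "a \<in> F j" using items jka(1) by auto
      have "m \<noteq> j" using False jka(1) jk by (force simp: tk_def)
      then have v: "v = (if m = k then Fm j k (- a) else 0)" using jka(2) jk by (simp add: Fm_neg)
      show "v \<in> ImF F Fm m"
      proof (cases "m = k")
        case True
        then show ?thesis using v jk ImF_single[of j m "- a"] Fneg by simp
      next
        case False
        then show ?thesis using v ImF_zero by simp
      qed
    qed
    finally show ?thesis .
  next
    case True
    let ?K = "tk ` {t \<in> set L. m < tk t}"
    have fK: "finite ?K" by simp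
    have neK: "?K \<noteq> {}" using True by auto
    obtain n where n: "n \<in> ?K" "\<forall>b\<in>?K. n \<le> b \<longrightarrow> n = b"
      using finite_has_maximal[OF fK neK] by blast
    have mn: "m < n" using n(1) by auto
    have nmax: "\<And>t. t \<in> set L \<Longrightarrow> \<not> n < tk t"
      using n mn by (metis (mono_tags, lifting) image_eqI less_imp_le mem_Collect_eq order.strict_trans order_less_irrefl)
    define L1 where "L1 = filter (\<lambda>t. tk t \<noteq> n) L"
    define L2 where "L2 = filter (\<lambda>t. \<not> tk t \<noteq> n) L"
    have split: "sg Fm L1 + sg Fm L2 = sg Fm L" unfolding L1_def L2_def by (rule sg_filter)
    have L2k: "\<forall>(j,k,a)\<in>set L2. k = n" unfolding L2_def by (auto simp: tk_def)
    have L2i: "\<forall>(j,k,a)\<in>set L2. j \<le> k \<and> k = n \<and> a \<in> F j" using items L2k unfolding L2_def by fastforce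
    have L2j: "\<forall>(j,k,a)\<in>set L2. j < n \<and> a \<in> F j" using items L2k unfolding L2_def by fastforce
    define y where "y = sum_list (map (\<lambda>(j,k,a). ee j a) L2)"
    define z where "z = sum_list (map (\<lambda>(j,k,a). Fm j k a) L2)"
    have sg2: "sg Fm L2 = y - ee n z" unfolding y_def z_def by (rule sgN[OF L2k])
    have sg1n: "sg Fm L1 n = 0"
    proof -
      have "sg Fm L1 n = sum_list (map (\<lambda>(j,k,a). (if n = j then a else 0) - (if n = k then Fm j k a else 0)) L1)"
        by (rule sg_apply)
      also have "\<dots> = 0"
      proof (rule sum_list_zero_if)
        fix t assume t: "t \<in> set L1"
        obtain j k a where tt: "t = (j,k,a)" by (cases t)
        have tL: "t \<in> set L" and kn: "k \<noteq> n" using t tt unfolding L1_def by (auto simp: tk_def)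
        have "j < k" using items tL tt by auto
        then have "n \<noteq> j" using nmax[OF tL] tt by (auto simp: tk_def)
        then show "(case t of (j,k,a) \<Rightarrow> (if n = j then a else 0) - (if n = k then Fm j k a else 0)) = 0"
          using tt kn by simp
      qed
      finally show ?thesis .
    qed
    have yn: "y n = 0"
    proof -
      have "y n = sum_list (map (\<lambda>f. f n) (map (\<lambda>(j,k,a). ee j a) L2))" unfolding y_def by (rule sum_list_fun_apply)
      also have "\<dots> = sum_list (map (\<lambda>(j,k,a). ee j a n) L2)" by (simp add: comp_def split_def)
      also have "\<dots> = 0"
      proof (rule sum_list_zero_if)
        fix t assume t: "t \<in> set L2"
        obtain j k a where tt: "t = (j,k,a)" by (cases t)
        have "j < n" using L2j t tt by auto
        then show "(case t of (j,k,a) \<Rightarrow> ee j a n) = 0" using tt by (auto simp: ee_def)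
      qed
      finally show ?thesis .
    qed
    have "sg Fm L n = 0" using zero_above mn by blast
    then have "sg Fm L1 n + sg Fm L2 n = 0" using split by (metis plus_fun_apply)
    then have z0: "z = 0" using sg1n yn sg2 by (simp add: ee_def)
    then have sg2y: "sg Fm L2 = y" using sg2 by simp
    have ydsum: "y \<in> dsum_below F n" unfolding y_def
    proof (rule dsum_sum_list)
      fix v assume "v \<in> set (map (\<lambda>(j,k,a). ee j a) L2)"
      then obtain j k a where "(j,k,a) \<in> set L2" "v = ee j a" by auto
      then show "v \<in> dsum_below F n" using L2j by (auto intro: dsum_ee)
    qed
    have "dsum_map Fm n y = z" unfolding y_def z_def using dm_sumee[OF L2i] by blast
    then have "y \<in> colim_rel s F Fm n" using inj ydsum z0 by simp
    then obtain L3 where L3: "\<forall>(j,k,a)\<in>set L3. j < k \<and> k < n \<and> a \<in> F j" "y = sg Fm L3"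
      using rel_rep by blast
    define L' where "L' = L1 @ L3"
    have sgL': "sg Fm L' = sg Fm L" unfolding L'_def using split sg2y L3(2) by simp
    have itemsL': "\<forall>(j,k,a)\<in>set L'. j < k \<and> a \<in> F j" using items L3(1) unfolding L'_def L1_def by auto
    have "(mset (map tk L'), mset (map tk L)) \<in> mult {(x, y). x < y}"
    proof -
      have e1: "mset (map tk L') = mset (map tk L1) + mset (map tk L3)" unfolding L'_def by simp
      have e2: "mset (map tk L) = mset (map tk L1) + mset (map tk L2)"
        unfolding L1_def L2_def by (rule mset_map_filter)
      have ne: "mset (map tk L2) \<noteq> {#}" using n(1) unfolding L2_def by (auto simp: filter_empty_conv)
      have "\<forall>k\<in>set_mset (mset (map tk L3)). \<exists>j\<in>set_mset (mset (map tk L2)). (k, j) \<in> {(x, y). x < y}"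
      proof
        fix k assume "k \<in> set_mset (mset (map tk L3))"
        then have "k < n" using L3(1) by (auto simp: tk_def)
        moreover have "n \<in> set_mset (mset (map tk L2))" using n(1) unfolding L2_def by auto
        ultimately show "\<exists>j\<in>set_mset (mset (map tk L2)). (k, j) \<in> {(x, y). x < y}" by blast
      qed
      then show ?thesis unfolding e1 e2 by (rule one_step_implies_mult[OF ne])
    qed
    moreover have "\<forall>l. m < l \<longrightarrow> sg Fm L' l = 0" using zero_above sgL' by simp
    ultimately have "sg Fm L' m \<in> ImF F Fm m" using IH itemsL' by blast
    then show ?thesis using sgL' by simp
  qed
qed

lemma fwd:
  assumes wfR: "wf {(x::'p, y). x < y}"
    and inj: "\<And>n y. y \<in> dsum_below F n \<Longrightarrow> dsum_map Fm n y = 0 \<Longrightarrow> y \<in> colim_rel s F Fm n"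
  shows "pseudo_projective F Fm"
  unfolding pseudo_projective_def pseudo_projective_at_def
proof (intro allI impI ballI)
  fix i J x j0
  assume H: "finite J \<and> J \<subseteq> {j. j \<le> i} \<and> (\<forall>j\<in>J. x j \<in> F j) \<and> (\<Sum>j\<in>J. Fm j i (x j)) = 0"
    and j0: "j0 \<in> maxset J"
  have fJ: "finite J" and Ji: "J \<subseteq> {j. j \<le> i}" and xF: "\<forall>j\<in>J. x j \<in> F j"
    and sum0: "(\<Sum>j\<in>J. Fm j i (x j)) = 0" using H by auto
  have j0J: "j0 \<in> J" and j0max: "\<forall>k\<in>J. \<not> j0 < k" using j0 unfolding maxset_def by auto
  show "x j0 \<in> ImF F Fm j0"
  proof (cases "i \<in> J")
    case True
    have "j0 = i" using j0max True Ji j0J by (auto simp: order.order_iff_strict)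
    have "(\<Sum>j\<in>J. Fm j i (x j)) = Fm i i (x i) + (\<Sum>j\<in>J - {i}. Fm j i (x j))"
      by (rule sum.remove[OF fJ True])
    then have "x i = - (\<Sum>j\<in>J - {i}. Fm j i (x j))"
      using sum0 Fm_id[of "x i" i] xF True by (simp add: eq_neg_iff_add_eq_0)
    also have "\<dots> = (\<Sum>j\<in>J - {i}. Fm j i (- x j))"
      by (simp add: sum_negf[symmetric]) (rule sum.cong, use xF Ji in \<open>auto simp: Fm_neg\<close>)
    finally have xi: "x i = (\<Sum>j\<in>J - {i}. Fm j i (- x j))" .
    have "x i \<in> ImF F Fm i"
      unfolding ImF_def mem_Collect_eq
      by (intro exI[of _ "J - {i}"] exI[of _ "\<lambda>j. - x j"] conjI xi)
         (use fJ Ji xF in \<open>auto simp: Fneg\<close>)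
    then show ?thesis using \<open>j0 = i\<close> by simp
  next
    case False
    define x' where "x' l = (if l \<in> J then x l else 0)" for l
    have supp: "{l. x' l \<noteq> 0} \<subseteq> J" by (auto simp: x'_def)
    have x'd: "x' \<in> dsum_below F i"
      unfolding dsum_below_def
    proof (intro CollectI conjI allI impI)
      show "x' l \<in> F l" for l using xF by (simp add: x'_def)
      show "\<not> l < i \<Longrightarrow> x' l = 0" for l using Ji False by (auto simp: x'_def order.order_iff_strict)
      show "finite {l. x' l \<noteq> 0}" using supp fJ finite_subset by blast
    qed
    have "dsum_map Fm i x' = (\<Sum>l\<in>J. Fm l i (x' l))"
      by (rule DM[OF dsum_finb[OF x'd] fJ supp Ji])
    also have "\<dots> = (\<Sum>l\<in>J. Fm l i (x l))" by (simp add: x'_def)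
    finally have "dsum_map Fm i x' = 0" using sum0 by simp
    then have "x' \<in> colim_rel s F Fm i" using inj x'd by blast
    then obtain L where L: "\<forall>(j,k,a)\<in>set L. j < k \<and> k < i \<and> a \<in> F j" "x' = sg Fm L"
      using rel_rep by blast
    have "sg Fm L j0 \<in> ImF F Fm j0"
    proof (rule lemA[OF wfR inj])
      show "\<forall>(j,k,a)\<in>set L. j < k \<and> a \<in> F j" using L(1) by auto
      show "\<forall>l. j0 < l \<longrightarrow> sg Fm L l = 0"
      proof (intro allI impI)
        fix l assume "j0 < l"
        then have "l \<notin> J" using j0max by blast
        then have "x' l = 0" by (simp add: x'_def)
        then show "sg Fm L l = 0" using L(2) by simp
      qed
    qed
    moreover have "x' j0 = x j0" using j0J by (simp add: x'_def)
    ultimately show ?thesis using L(2) by metis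
  qed
qed

lemma bwd:
  assumes wfR: "wf {(x::'p, y). x < y}"
    and pp: "pseudo_projective F Fm"
  shows "x \<in> dsum_below F i \<Longrightarrow> dsum_map Fm i x = 0 \<Longrightarrow> x \<in> colim_rel s F Fm i"
  using wf_mult[OF wfR]
proof (induction "mset_set {l. x l \<noteq> 0}" arbitrary: x rule: wf_induct_rule)
  case less
  note IH = less.hyps
  let ?S = "{l. x l \<noteq> 0}"
  have xd: "x \<in> dsum_below F i" and dm0: "dsum_map Fm i x = 0" by fact+
  have fS: "finite ?S" and Si: "\<forall>l\<in>?S. l < i" and xF: "\<forall>l. x l \<in> F l"
    using xd unfolding dsum_below_def by auto
  show ?case
  proof (cases "?S = {}")
    case True
    then have "x = 0" by (auto simp: fun_eq_iff)
    then show ?thesis using rel_zero by simp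
  next
    case False
    obtain m where mS: "m \<in> ?S" and mmax: "\<forall>b\<in>?S. m \<le> b \<longrightarrow> m = b"
      using finite_has_maximal[OF fS False] by blast
    have mi: "m < i" using Si mS by blast
    have "m \<in> maxset ?S" using mS mmax unfolding maxset_def by (auto simp: order.order_iff_strict)
    moreover have "finite ?S \<and> ?S \<subseteq> {j. j \<le> i} \<and> (\<forall>j\<in>?S. x j \<in> F j) \<and> (\<Sum>j\<in>?S. Fm j i (x j)) = 0"
      using fS Si xF dm0 unfolding dsum_map_def by (auto simp: order.order_iff_strict)
    ultimately have "x m \<in> ImF F Fm m"
      using pp unfolding pseudo_projective_def pseudo_projective_at_def by blast
    then obtain K y where K: "x m = (\<Sum>k\<in>K. Fm k m (y k))" "finite K" "K \<subseteq> {k. k < m}" "\<forall>k\<in>K. y k \<in> F k"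
      unfolding ImF_def by blast
    define r where "r = (\<Sum>k\<in>K. ee k (y k) - ee m (Fm k m (y k)))"
    have rrel: "r \<in> colim_rel s F Fm i"
      unfolding r_def colim_rel_def
    proof (rule module.span_sum[OF modf])
      fix k assume "k \<in> K"
      then have "k \<le> m" "y k \<in> F k" using K by auto
      then show "ee k (y k) - ee m (Fm k m (y k)) \<in> module.span (fscale s)
          {(\<lambda>l. (if l = j then a else 0) - (if l = k then Fm j k a else 0)) | j k a. j \<le> k \<and> k < i \<and> a \<in> F j}"
        using mi by (intro module.span_base[OF modf]) (auto simp: gen_eq[symmetric])
    qed
    have rapp: "r l = (\<Sum>k\<in>K. ee k (y k) l - ee m (Fm k m (y k)) l)" for l
      unfolding r_def sum_fun_apply minus_apply ..
    define x' where "x' = x + r"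
    have rd: "r \<in> dsum_below F i" and rdm: "dsum_map Fm i r = 0" using rel_props[OF rrel] by auto
    have x'd: "x' \<in> dsum_below F i" unfolding x'_def by (rule dsum_add[OF xd rd])
    have x'dm: "dsum_map Fm i x' = 0"
      unfolding x'_def using dm_add[OF dsum_finb[OF xd] dsum_finb[OF rd]] dm0 rdm by simp
    have x'm: "x' m = 0"
    proof -
      have "r m = (\<Sum>k\<in>K. - Fm k m (y k))"
        unfolding rapp by (rule sum.cong) (use K in \<open>auto simp: ee_def\<close>)
      then show ?thesis unfolding x'_def using K(1) by (simp add: sum_negf)
    qed
    have x'o: "x' l = 0" if "l \<notin> ?S" "l \<notin> K" for l
    proof -
      have "l \<noteq> m" using that mS by blast
      then have "r l = 0" unfolding rapp using that by (auto simp: ee_def intro: sum.neutral)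
      then show ?thesis unfolding x'_def using that by simp
    qed
    let ?S' = "{l. x' l \<noteq> 0}"
    have S'sub: "?S' \<subseteq> (?S - {m}) \<union> K" using x'm x'o by auto
    have fS': "finite ?S'" using x'd unfolding dsum_below_def by auto
    let ?A = "?S' \<inter> ?S"
    have e1: "mset_set ?S' = mset_set ?A + mset_set (?S' - ?S)"
      by (subst mset_set_Union[symmetric]) (use fS' in \<open>auto intro: arg_cong[where f=mset_set]\<close>)
    have e2: "mset_set ?S = mset_set ?A + mset_set (?S - ?A)"
      by (subst mset_set_Union[symmetric]) (use fS in \<open>auto intro: arg_cong[where f=mset_set]\<close>)
    have "m \<notin> ?S'" using x'm by simp
    then have mSA: "m \<in> ?S - ?A" using mS by blast
    have finSA: "finite (?S - ?A)" using fS by simp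
    have ne: "mset_set (?S - ?A) \<noteq> {#}" using mSA finSA by (metis empty_iff mset_set_empty_iff)
    have "\<forall>k\<in>set_mset (mset_set (?S' - ?S)). \<exists>j\<in>set_mset (mset_set (?S - ?A)). (k, j) \<in> {(x, y). x < y}"
    proof
      fix k assume "k \<in> set_mset (mset_set (?S' - ?S))"
      then have "k \<in> ?S' - ?S" using fS' by simp
      then have "k \<in> K" using S'sub by blast
      then have "k < m" using K by auto
      moreover have "m \<in> set_mset (mset_set (?S - ?A))" using mSA finSA by (simp only: finite_set_mset_mset_set)
      ultimately show "\<exists>j\<in>set_mset (mset_set (?S - ?A)). (k, j) \<in> {(x, y). x < y}" by blast
    qed
    then have "(mset_set ?S', mset_set ?S) \<in> mult {(x, y). x < y}"
      unfolding e1 e2 by (rule one_step_implies_mult[OF ne])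
    then have "x' \<in> colim_rel s F Fm i" using IH x'd x'dm by blast
    from rel_diff[OF this rrel] show ?thesis unfolding x'_def by simp
  qed
qed

end
theorem theoremA:
  fixes s :: "'r::comm_ring_1 \<Rightarrow> 'm::ab_group_add \<Rightarrow> 'm"
    and F :: "'p::order \<Rightarrow> 'm set"
    and Fm :: "'p \<Rightarrow> 'p \<Rightarrow> 'm \<Rightarrow> 'm"
  assumes "module s"
    and "DCC TYPE('p)"
    and "is_module_functor s F Fm"
  shows "(\<forall>i. inj_on (colim_map Fm i) (colim s F Fm i)) \<longleftrightarrow> pseudo_projective F Fm"
proof -
  have wfR: "wf {(x::'p, y). x < y}" by (rule wf_less_DCC[OF assms(2)])
  show ?thesis
  proof
    assume H: "\<forall>i. inj_on (colim_map Fm i) (colim s F Fm i)"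
    have inj: "\<And>n y. y \<in> dsum_below F n \<Longrightarrow> dsum_map Fm n y = 0 \<Longrightarrow> y \<in> colim_rel s F Fm n"
      using H inj_iff[OF assms(1) assms(3)] by blast
    show "pseudo_projective F Fm" by (rule fwd[OF assms(1) assms(3) wfR inj])
  next
    assume pp: "pseudo_projective F Fm"
    show "\<forall>i. inj_on (colim_map Fm i) (colim s F Fm i)"
    proof
      fix i
      show "inj_on (colim_map Fm i) (colim s F Fm i)"
        unfolding inj_iff[OF assms(1) assms(3)]
        using bwd[OF assms(1) assms(3) wfR pp] by blast
    qed
  qed
qed

end
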